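(* Let $(Q,P)$ be a weakly quasi-lattice ordered group and let $\Lambda$ be a $P$-graph with $\mathrm{FA}(\Lambda)\neq\emptyset$. Let $\lambda,\lambda'\in\Lambda$ with $s(\lambda)=r(\lambda')$. Then the left-shift map $Z(\lambda)\to Z(s(\lambda))$, $x\mapsto\lambda^*\cdot x$, is a continuous bijection whose inverse is the right-shift map $Z(s(\lambda))\to Z(\lambda)$, $x\mapsto\lambda\cdot x$; moreover $\{\lambda^*\cdot x: x\in Z(\lambda\lambda')\}=Z(\lambda')$.
   Context: $(Q,P)$ weakly quasi-lattice ordered: $Q$ a discrete group, $P\subseteq Q$ a subsemigroup containing the identity $e$ with $P\cap P^{-1}=\{e\}$, and, with $p\le r$ meaning $pq=r$ for some $q\in P$, any two elements of $P$ with a common upper bound have a least common upper bound. A $P$-graph is a countable small category $\Lambda$ (identities $\Lambda^{(0)}$, range/source $r,s$) with a functor $d:\Lambda\to P$ with unique factorisation (if $d(\lambda)=pq$ there are unique $\mu,\nu$ with $\lambda=\mu\nu$, $d(\mu)=p$, $d(\nu)=q$). Write $\lambda\Lambda=\{\lambda\mu: s(\lambda)=r(\mu)\}$, $\mu\preceq\lambda$ iff $\lambda\in\mu\Lambda$. $\mathrm{FA}(\Lambda)$ is the set of $\lambda$ such that for all $\mu\in\lambda\Lambda,\nu\in\Lambda$ there is finite $J\subseteq\Lambda$ with $\mu\Lambda\cap\nu\Lambda=\bigcup_{\kappa\in J}\kappa\Lambda$. A filter is a nonempty hereditary and directed subset of $\Lambda$ (w.r.t. $\preceq$); $\mathcal{F}(\Lambda)$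 is the set of filters, topologised as a subspace of $\mathcal{P}(\Lambda)\cong\{0,1\}^\Lambda$ with the product topology (basis $\{x: K_1\subseteq x\subseteq\Lambda\setminus K_2\}$, $K_1,K_2$ finite). For $\mu\in\Lambda$, $Z(\mu)=\{x\in\mathcal{F}(\Lambda):\mu\in x\}$ with the subspace topology. For $x\in Z(\lambda)$, $\lambda^*\cdot x=\{\mu\in\Lambda:\lambda\mu\in x\}$ (a filter in $Z(s(\lambda))$), and for $x\in Z(s(\lambda))$, $\lambda\cdot x=\{\zeta\in\Lambda:\zeta\preceq\lambda\mu\text{ for some }\mu\in x\}$ (a filter in $Z(\lambda)$). *)

theory Defs
  imports "HOL-Analysis.Analysis" "HOL-Algebra.Group"
begin

definition wqlo_le :: "('g, 'b) monoid_scheme \<Rightarrow> 'g set \<Rightarrow> 'g \<Rightarrow> 'g \<Rightarrow> bool" where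
  "wqlo_le G P p r \<longleftrightarrow> (\<exists>q\<in>P. p \<otimes>\<^bsub>G\<^esub> q = r)"

definition wqlo :: "('g, 'b) monoid_scheme \<Rightarrow> 'g set \<Rightarrow> bool" where
  "wqlo G P \<longleftrightarrow> group G \<and> P \<subseteq> carrier G \<and> \<one>\<^bsub>G\<^esub> \<in> P
     \<and> (\<forall>p\<in>P. \<forall>q\<in>P. p \<otimes>\<^bsub>G\<^esub> q \<in> P)
     \<and> {p \<in> P. inv\<^bsub>G\<^esub> p \<in> P} = {\<one>\<^bsub>G\<^esub>}
     \<and> (\<forall>p\<in>P. \<forall>q\<in>P. (\<exists>u\<in>P. wqlo_le G P p u \<and> wqlo_le G P q u) \<longrightarrow>
          (\<exists>c\<in>P. wqlo_le G P p c \<and> wqlo_le G P q c \<and>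
              (\<forall>u\<in>P. wqlo_le G P p u \<and> wqlo_le G P q u \<longrightarrow> wqlo_le G P c u)))"

text \<open>A small category is given by its set of morphisms L, the set of identity
  morphisms Ob (identified with objects), range r, source s and a composition cmp,
  where cmp a b is meaningful when s a = r b.\<close>

definition small_category ::
  "'a set \<Rightarrow> 'a set \<Rightarrow> ('a \<Rightarrow> 'a) \<Rightarrow> ('a \<Rightarrow> 'a) \<Rightarrow> ('a \<Rightarrow> 'a \<Rightarrow> 'a) \<Rightarrow> bool" where
  "small_category L Ob r s cmp \<longleftrightarrow>
     Ob \<subseteq> L
     \<and> (\<forall>a\<in>L. r a \<in> Ob \<and> s a \<in> Ob)
     \<and> (\<forall>v\<in>Ob. r v = v \<and> s v = v)
     \<and> (\<forall>a\<in>L. \<forall>b\<in>L. s a = r b \<longrightarrow>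
           cmp a b \<in> L \<and> r (cmp a b) = r a \<and> s (cmp a b) = s b)
     \<and> (\<forall>a\<in>L. \<forall>b\<in>L. \<forall>c\<in>L. s a = r b \<and> s b = r c \<longrightarrow>
           cmp (cmp a b) c = cmp a (cmp b c))
     \<and> (\<forall>a\<in>L. cmp (r a) a = a \<and> cmp a (s a) = a)"

definition Pgraph ::
  "('g, 'b) monoid_scheme \<Rightarrow> 'g set \<Rightarrow> 'a set \<Rightarrow> 'a set \<Rightarrow> ('a \<Rightarrow> 'a) \<Rightarrow> ('a \<Rightarrow> 'a)
     \<Rightarrow> ('a \<Rightarrow> 'a \<Rightarrow> 'a) \<Rightarrow> ('a \<Rightarrow> 'g) \<Rightarrow> bool" where
  "Pgraph G P L Ob r s cmp d \<longleftrightarrow>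
     countable L
     \<and> small_category L Ob r s cmp
     \<and> (\<forall>a\<in>L. d a \<in> P)
     \<and> (\<forall>v\<in>Ob. d v = \<one>\<^bsub>G\<^esub>)
     \<and> (\<forall>a\<in>L. \<forall>b\<in>L. s a = r b \<longrightarrow> d (cmp a b) = d a \<otimes>\<^bsub>G\<^esub> d b)
     \<and> (\<forall>a\<in>L. \<forall>p\<in>P. \<forall>q\<in>P. d a = p \<otimes>\<^bsub>G\<^esub> q \<longrightarrow>
          (\<exists>!(m, n). m \<in> L \<and> n \<in> L \<and> s m = r n \<and> a = cmp m n \<and> d m = p \<and> d n = q))"

definition ext_set :: "'a set \<Rightarrow> ('a \<Rightarrow> 'a) \<Rightarrow> ('a \<Rightarrow> 'a) \<Rightarrow> ('a \<Rightarrow> 'a \<Rightarrow> 'a) \<Rightarrow> 'a \<Rightarrow> 'a set" where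
  "ext_set L r s cmp a = {cmp a m | m. m \<in> L \<and> s a = r m}"

definition pre :: "'a set \<Rightarrow> ('a \<Rightarrow> 'a) \<Rightarrow> ('a \<Rightarrow> 'a) \<Rightarrow> ('a \<Rightarrow> 'a \<Rightarrow> 'a) \<Rightarrow> 'a \<Rightarrow> 'a \<Rightarrow> bool" where
  "pre L r s cmp m a \<longleftrightarrow> a \<in> ext_set L r s cmp m"

definition FA :: "'a set \<Rightarrow> ('a \<Rightarrow> 'a) \<Rightarrow> ('a \<Rightarrow> 'a) \<Rightarrow> ('a \<Rightarrow> 'a \<Rightarrow> 'a) \<Rightarrow> 'a set" where
  "FA L r s cmp = {a \<in> L. \<forall>m \<in> ext_set L r s cmp a. \<forall>n \<in> L.
      \<exists>J. finite J \<and> J \<subseteq> L \<and>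
        ext_set L r s cmp m \<inter> ext_set L r s cmp n = (\<Union>k\<in>J. ext_set L r s cmp k)}"

definition filters :: "'a set \<Rightarrow> ('a \<Rightarrow> 'a) \<Rightarrow> ('a \<Rightarrow> 'a) \<Rightarrow> ('a \<Rightarrow> 'a \<Rightarrow> 'a) \<Rightarrow> 'a set set" where
  "filters L r s cmp = {x. x \<subseteq> L \<and> x \<noteq> {}
      \<and> (\<forall>a\<in>x. \<forall>m\<in>L. pre L r s cmp m a \<longrightarrow> m \<in> x)
      \<and> (\<forall>a\<in>x. \<forall>b\<in>x. \<exists>c\<in>x. pre L r s cmp a c \<and> pre L r s cmp b c)}"

text \<open>Product topology on P(\<Lambda>) = {0,1}^\<Lambda>, given by its standard basis
  {x : K1 \<subseteq> x \<subseteq> \<Lambda> - K2}, K1, K2 finite.\<close>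
definition powerset_top :: "'a set \<Rightarrow> 'a set topology" where
  "powerset_top L = topology_generated_by
     {{x. K1 \<subseteq> x \<and> x \<subseteq> L - K2} | K1 K2. finite K1 \<and> finite K2 \<and> K1 \<subseteq> L \<and> K2 \<subseteq> L}"

definition filter_top :: "'a set \<Rightarrow> ('a \<Rightarrow> 'a) \<Rightarrow> ('a \<Rightarrow> 'a) \<Rightarrow> ('a \<Rightarrow> 'a \<Rightarrow> 'a) \<Rightarrow> 'a set topology" where
  "filter_top L r s cmp = subtopology (powerset_top L) (filters L r s cmp)"

definition cyl :: "'a set \<Rightarrow> ('a \<Rightarrow> 'a) \<Rightarrow> ('a \<Rightarrow> 'a) \<Rightarrow> ('a \<Rightarrow> 'a \<Rightarrow> 'a) \<Rightarrow> 'a \<Rightarrow> 'a set set" where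
  "cyl L r s cmp m = {x \<in> filters L r s cmp. m \<in> x}"

definition lshift :: "'a set \<Rightarrow> ('a \<Rightarrow> 'a) \<Rightarrow> ('a \<Rightarrow> 'a) \<Rightarrow> ('a \<Rightarrow> 'a \<Rightarrow> 'a) \<Rightarrow> 'a \<Rightarrow> 'a set \<Rightarrow> 'a set" where
  "lshift L r s cmp a x = {m \<in> L. s a = r m \<and> cmp a m \<in> x}"

definition rshift :: "'a set \<Rightarrow> ('a \<Rightarrow> 'a) \<Rightarrow> ('a \<Rightarrow> 'a) \<Rightarrow> ('a \<Rightarrow> 'a \<Rightarrow> 'a) \<Rightarrow> 'a \<Rightarrow> 'a set \<Rightarrow> 'a set" where
  "rshift L r s cmp a x = {z \<in> L. \<exists>m\<in>x. s a = r m \<and> pre L r s cmp z (cmp a m)}"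

end

theory Submission
  imports Defs
begin

locale pg =
  fixes L Ob :: "'a set" and r s :: "'a \<Rightarrow> 'a" and cmp :: "'a \<Rightarrow> 'a \<Rightarrow> 'a"
  assumes sc: "small_category L Ob r s cmp"
  and canc: "\<And>a m m'. a\<in>L \<Longrightarrow> m\<in>L \<Longrightarrow> m'\<in>L \<Longrightarrow> s a = r m \<Longrightarrow> s a = r m'
      \<Longrightarrow> cmp a m = cmp a m' \<Longrightarrow> m = m'"
begin

lemma ObL: "Ob \<subseteq> L" using sc unfolding small_category_def by blast
lemma rOb: "a\<in>L \<Longrightarrow> r a \<in> Ob" using sc unfolding small_category_def by blast
lemma sOb: "a\<in>L \<Longrightarrow> s a \<in> Ob" using sc unfolding small_category_def by blast
lemma Obrs: "v\<in>Ob \<Longrightarrow> r v = v \<and> s v = v" using sc unfolding small_category_def by blast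
lemma cmpL: "a\<in>L \<Longrightarrow> b\<in>L \<Longrightarrow> s a = r b \<Longrightarrow> cmp a b \<in> L \<and> r (cmp a b) = r a \<and> s (cmp a b) = s b"
  using sc unfolding small_category_def by blast
lemma assoc: "a\<in>L \<Longrightarrow> b\<in>L \<Longrightarrow> c\<in>L \<Longrightarrow> s a = r b \<Longrightarrow> s b = r c \<Longrightarrow> cmp (cmp a b) c = cmp a (cmp b c)"
  using sc unfolding small_category_def by blast
lemma unitl: "a\<in>L \<Longrightarrow> cmp (r a) a = a" using sc unfolding small_category_def by blast
lemma unitr: "a\<in>L \<Longrightarrow> cmp a (s a) = a" using sc unfolding small_category_def by blast

lemma sL: "a\<in>L \<Longrightarrow> s a \<in> L" using ObL sOb by blast
lemma rL: "a\<in>L \<Longrightarrow> r a \<in> L" using ObL rOb by blast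
lemma rs_s: "a\<in>L \<Longrightarrow> r (s a) = s a" using Obrs sOb by blast
lemma rr: "a\<in>L \<Longrightarrow> r (r a) = r a" using Obrs rOb by blast
lemma sr: "a\<in>L \<Longrightarrow> s (r a) = r a" using Obrs rOb by blast

abbreviation "pr \<equiv> pre L r s cmp"

lemma pre_iff: "pr m a \<longleftrightarrow> (\<exists>n\<in>L. s m = r n \<and> a = cmp m n)"
  by (auto simp: pre_def ext_set_def)

lemma pre_L: "m\<in>L \<Longrightarrow> pr m a \<Longrightarrow> a \<in> L"
  using cmpL pre_iff by auto
lemma pre_r: "m\<in>L \<Longrightarrow> pr m a \<Longrightarrow> r a = r m"
  using cmpL pre_iff by auto
lemma pre_refl: "a\<in>L \<Longrightarrow> pr a a"
  unfolding pre_iff using unitr sL rs_s by metis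
lemma pre_trans: "a\<in>L \<Longrightarrow> pr a b \<Longrightarrow> pr b c \<Longrightarrow> pr a c"
proof -
  assume a: "a\<in>L" "pr a b" "pr b c"
  then obtain n where n: "n\<in>L" "s a = r n" "b = cmp a n" using pre_iff by auto
  moreover obtain k where k: "k\<in>L" "s b = r k" "c = cmp b k" using a pre_iff by auto
  ultimately show ?thesis unfolding pre_iff using cmpL assoc a
    by (rule_tac x="cmp n k" in bexI) auto
qed
lemma pre_rl: "a\<in>L \<Longrightarrow> pr (r a) a"
  unfolding pre_iff using unitl sr by metis
lemma pre_cmp: "a\<in>L \<Longrightarrow> m\<in>L \<Longrightarrow> s a = r m \<Longrightarrow> pr m n \<Longrightarrow> pr (cmp a m) (cmp a n)"
  unfolding pre_iff using cmpL assoc by metis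
lemma pre_cmp_inv: "a\<in>L \<Longrightarrow> m\<in>L \<Longrightarrow> n\<in>L \<Longrightarrow> s a = r m \<Longrightarrow> s a = r n \<Longrightarrow> pr (cmp a m) (cmp a n) \<Longrightarrow> pr m n"
proof -
  assume a: "a\<in>L" "m\<in>L" "n\<in>L" "s a = r m" "s a = r n" "pr (cmp a m) (cmp a n)"
  then obtain k where k: "k\<in>L" "s (cmp a m) = r k" "cmp a n = cmp (cmp a m) k" using pre_iff by auto
  have "cmp a n = cmp a (cmp m k)" using k a assoc cmpL by metis
  hence "n = cmp m k" using canc a k cmpL by metis
  thus ?thesis unfolding pre_iff using k a cmpL by auto
qed
lemma pre_lam: "a\<in>L \<Longrightarrow> pr a c \<Longrightarrow> \<exists>n\<in>L. s a = r n \<and> c = cmp a n"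
  using pre_iff by auto

abbreviation "F \<equiv> filters L r s cmp"

lemma filt: "x \<in> F \<Longrightarrow> x \<subseteq> L"
  "x \<in> F \<Longrightarrow> a\<in>x \<Longrightarrow> m\<in>L \<Longrightarrow> pr m a \<Longrightarrow> m \<in> x"
  "x \<in> F \<Longrightarrow> a\<in>x \<Longrightarrow> b\<in>x \<Longrightarrow> \<exists>c\<in>x. pr a c \<and> pr b c"
  unfolding filters_def by blast+

abbreviation "ls a \<equiv> lshift L r s cmp a"
abbreviation "rsh a \<equiv> rshift L r s cmp a"
abbreviation "Z \<equiv> cyl L r s cmp"

lemma ls_Z: assumes lam: "lam\<in>L" and x: "x \<in> Z lam" shows "ls lam x \<in> Z (s lam)"
proof -
  have xF: "x\<in>F" and lx: "lam\<in>x" using x by (auto simp: cyl_def)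
  have sin: "s lam \<in> ls lam x" using lam lx unitr sL rs_s by (auto simp: lshift_def)
  have her: "\<forall>a\<in>ls lam x. \<forall>m\<in>L. pr m a \<longrightarrow> m \<in> ls lam x"
  proof (intro ballI impI)
    fix a m assume a: "a \<in> ls lam x" "m\<in>L" "pr m a"
    then have aL: "a\<in>L" "s lam = r a" "cmp lam a \<in> x" by (auto simp: lshift_def)
    have "r a = r m" using pre_r a by blast
    hence rm: "s lam = r m" using aL by simp
    have "pr (cmp lam m) (cmp lam a)" using pre_cmp lam a rm by blast
    hence "cmp lam m \<in> x" using filt(2)[OF xF aL(3)] cmpL lam a rm by blast
    thus "m \<in> ls lam x" using a rm by (auto simp: lshift_def)
  qed
  have dir: "\<forall>a\<in>ls lam x. \<forall>b\<in>ls lam x. \<exists>c\<in>ls lam x. pr a c \<and> pr b c"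
  proof (intro ballI)
    fix a b assume a: "a \<in> ls lam x" and b: "b \<in> ls lam x"
    then have aL: "a\<in>L" "s lam = r a" "cmp lam a \<in> x" and bL: "b\<in>L" "s lam = r b" "cmp lam b \<in> x"
      by (auto simp: lshift_def)
    obtain c where c: "c\<in>x" "pr (cmp lam a) c" "pr (cmp lam b) c" using filt(3)[OF xF aL(3) bL(3)] by blast
    have cal: "cmp lam a \<in> L" using cmpL lam aL by blast
    have "pr lam (cmp lam a)" using pre_iff lam aL by blast
    hence "pr lam c" using pre_trans lam c by blast
    then obtain n where n: "n\<in>L" "s lam = r n" "c = cmp lam n" using pre_lam lam by blast
    have "pr a n" using pre_cmp_inv lam aL n c by metis
    moreover have "pr b n" using pre_cmp_inv lam bL n c by metis
    moreover have "n \<in> ls lam x" using n c by (auto simp: lshift_def)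
    ultimately show "\<exists>c\<in>ls lam x. pr a c \<and> pr b c" by blast
  qed
  have "ls lam x \<subseteq> L" by (auto simp: lshift_def)
  thus ?thesis using sin her dir unfolding cyl_def filters_def by blast
qed

lemma rs_Z: assumes lam: "lam\<in>L" and y: "y \<in> Z (s lam)" shows "rsh lam y \<in> Z lam"
proof -
  have yF: "y\<in>F" and sy: "s lam\<in>y" using y by (auto simp: cyl_def)
  have lin: "lam \<in> rsh lam y" unfolding rshift_def
  proof (intro CollectI conjI bexI)
    show "pr lam (cmp lam (s lam))" using lam unitr pre_refl by simp
  qed (use lam sy rs_s in auto)
  have her: "\<forall>a\<in>rsh lam y. \<forall>m\<in>L. pr m a \<longrightarrow> m \<in> rsh lam y"
    unfolding rshift_def using pre_trans by blast
  have dir: "\<forall>a\<in>rsh lam y. \<forall>b\<in>rsh lam y. \<exists>c\<in>rsh lam y. pr a c \<and> pr b c"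
  proof (intro ballI)
    fix a b assume a: "a \<in> rsh lam y" and b: "b \<in> rsh lam y"
    then obtain m1 m2 where m: "a\<in>L" "m1\<in>y" "s lam = r m1" "pr a (cmp lam m1)"
       "b\<in>L" "m2\<in>y" "s lam = r m2" "pr b (cmp lam m2)" by (auto simp: rshift_def)
    obtain c where c: "c\<in>y" "pr m1 c" "pr m2 c" using filt(3)[OF yF m(2) m(6)] by blast
    have L: "m1\<in>L" "m2\<in>L" "c\<in>L" using filt(1)[OF yF] m c by auto
    have rc: "s lam = r c" using pre_r L c m by metis
    have cc: "cmp lam c \<in> L" using cmpL lam L rc by blast
    have "pr a (cmp lam c)" using pre_trans m pre_cmp lam L c by metis
    moreover have "pr b (cmp lam c)" using pre_trans m pre_cmp lam L c by metis
    moreover have "cmp lam c \<in> rsh lam y" unfolding rshift_def using cc c rc pre_refl by blast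
    ultimately show "\<exists>c\<in>rsh lam y. pr a c \<and> pr b c" by blast
  qed
  have "rsh lam y \<subseteq> L" by (auto simp: rshift_def)
  thus ?thesis using lin her dir unfolding cyl_def filters_def by blast
qed

lemma rs_ls: assumes lam: "lam\<in>L" and x: "x \<in> Z lam" shows "rsh lam (ls lam x) = x"
proof -
  have xF: "x\<in>F" and lx: "lam\<in>x" using x by (auto simp: cyl_def)
  show ?thesis
  proof
    show "rsh lam (ls lam x) \<subseteq> x"
      unfolding rshift_def lshift_def using filt(2)[OF xF] by blast
    show "x \<subseteq> rsh lam (ls lam x)"
    proof
      fix z assume z: "z\<in>x"
      obtain c where c: "c\<in>x" "pr lam c" "pr z c" using filt(3)[OF xF lx z] by blast
      then obtain n where n: "n\<in>L" "s lam = r n" "c = cmp lam n" using pre_lam lam by blast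
      show "z \<in> rsh lam (ls lam x)" unfolding rshift_def lshift_def
        using n c z filt(1)[OF xF] by blast
    qed
  qed
qed

lemma ls_rs: assumes lam: "lam\<in>L" and y: "y \<in> Z (s lam)" shows "ls lam (rsh lam y) = y"
proof -
  have yF: "y\<in>F" and sy: "s lam\<in>y" using y by (auto simp: cyl_def)
  show ?thesis
  proof
    show "ls lam (rsh lam y) \<subseteq> y"
    proof
      fix m assume "m \<in> ls lam (rsh lam y)"
      then obtain m' where m: "m\<in>L" "s lam = r m" "m'\<in>y" "s lam = r m'" "pr (cmp lam m) (cmp lam m')"
        by (auto simp: lshift_def rshift_def)
      have "m'\<in>L" using filt(1)[OF yF] m by blast
      hence "pr m m'" using pre_cmp_inv lam m by blast
      thus "m\<in>y" using filt(2)[OF yF] m by blast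
    qed
    show "y \<subseteq> ls lam (rsh lam y)"
    proof
      fix m assume m: "m\<in>y"
      obtain c where c: "c\<in>y" "pr (s lam) c" "pr m c" using filt(3)[OF yF sy m] by blast
      have L: "m\<in>L" "c\<in>L" using m c filt(1)[OF yF] by auto
      have "r c = s lam" using pre_r c sL lam rs_s by metis
      moreover have "r c = r m" using pre_r c L by metis
      ultimately have rm: "s lam = r m" by simp
      have "cmp lam m \<in> L" using cmpL lam L rm by blast
      thus "m \<in> ls lam (rsh lam y)" unfolding lshift_def rshift_def
        using L m rm pre_refl by blast
    qed
  qed
qed


lemma top_pw: "topspace (powerset_top L) = {x. x \<subseteq> L}"
  unfolding powerset_top_def topology_generated_by_topspace by blast

lemma open_basic: "finite K1 \<Longrightarrow> finite K2 \<Longrightarrow> K1 \<subseteq> L \<Longrightarrow> K2 \<subseteq> L \<Longrightarrow>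
   openin (powerset_top L) {x. K1 \<subseteq> x \<and> x \<subseteq> L - K2}"
  unfolding powerset_top_def openin_topology_generated_by_iff
  by (rule generate_topology_on.Basis) blast

lemma ls_cont: assumes lam: "lam\<in>L"
  shows "continuous_map (subtopology (filter_top L r s cmp) (Z lam))
                        (subtopology (filter_top L r s cmp) (Z (s lam))) (ls lam)"
proof -
  define X where "X = subtopology (powerset_top L) (F \<inter> Z lam)"
  have ZF: "Z lam \<subseteq> F" by (auto simp: cyl_def)
  have ZL: "\<And>x. x \<in> Z lam \<Longrightarrow> x \<subseteq> L" using ZF filt(1) by blast
  have tX: "topspace X = Z lam" unfolding X_def using ZF filt(1) by (auto simp: top_pw)
  have A: "ls lam \<in> topspace X \<rightarrow> F \<inter> Z (s lam)" using tX ls_Z lam by (auto simp: cyl_def)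
  have B: "continuous_map X (topology_generated_by {{x. K1 \<subseteq> x \<and> x \<subseteq> L - K2} |K1 K2. finite K1 \<and> finite K2 \<and> K1 \<subseteq> L \<and> K2 \<subseteq> L}) (ls lam)"
    unfolding continuous_on_generated_topo_iff
  proof (intro conjI allI impI)
    fix U assume "U \<in> {{x. K1 \<subseteq> x \<and> x \<subseteq> L - K2} |K1 K2. finite K1 \<and> finite K2 \<and> K1 \<subseteq> L \<and> K2 \<subseteq> L}"
    then obtain K1 K2 where K: "U = {x. K1 \<subseteq> x \<and> x \<subseteq> L - K2}" "finite K1" "finite K2" "K1 \<subseteq> L" "K2 \<subseteq> L"
      by blast
    show "openin X (ls lam -` U \<inter> topspace X)"
    proof (cases "\<forall>m\<in>K1. s lam = r m")
      case True
      let ?T = "{x. cmp lam ` K1 \<subseteq> x \<and> x \<subseteq> L - cmp lam ` {m\<in>K2. s lam = r m}}"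
      have o: "openin (powerset_top L) ?T"
        apply (rule open_basic) using K True cmpL lam by auto
      have "ls lam -` U \<inter> topspace X = ?T \<inter> (F \<inter> Z lam)"
        unfolding tX K(1) using True K ZF ZL by (auto simp: lshift_def) (meson ZL subsetD)
      thus ?thesis unfolding X_def openin_subtopology using o by blast
    next
      case False
      have "ls lam -` U \<inter> topspace X = {}"
        unfolding K(1) using False by (auto simp: lshift_def)
      thus ?thesis by simp
    qed
  next
    show "ls lam ` topspace X \<subseteq> \<Union> {{x. K1 \<subseteq> x \<and> x \<subseteq> L - K2} |K1 K2. finite K1 \<and> finite K2 \<and> K1 \<subseteq> L \<and> K2 \<subseteq> L}"
      by (auto simp: lshift_def)
  qed
  show ?thesis unfolding filter_top_def subtopology_subtopology continuous_map_in_subtopology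
    using A B unfolding X_def powerset_top_def by blast
qed


lemma ls_img: assumes lam: "lam\<in>L" and lam': "lam'\<in>L" and sr: "s lam = r lam'"
  shows "ls lam ` Z (cmp lam lam') = Z lam'"
proof
  have cl: "cmp lam lam' \<in> L" using cmpL lam lam' sr by blast
  show "ls lam ` Z (cmp lam lam') \<subseteq> Z lam'"
  proof
    fix y assume "y \<in> ls lam ` Z (cmp lam lam')"
    then obtain x where x: "x \<in> Z (cmp lam lam')" "y = ls lam x" by blast
    have xF: "x\<in>F" and cx: "cmp lam lam' \<in> x" using x by (auto simp: cyl_def)
    have "pr lam (cmp lam lam')" using pre_iff lam' sr by blast
    hence "lam \<in> x" using filt(2)[OF xF cx] lam by blast
    hence "x \<in> Z lam" using xF by (auto simp: cyl_def)
    hence "y \<in> Z (s lam)" using ls_Z lam x by blast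
    moreover have "lam' \<in> y" using x(2) lam' sr cx by (auto simp: lshift_def)
    ultimately show "y \<in> Z lam'" by (auto simp: cyl_def)
  qed
  show "Z lam' \<subseteq> ls lam ` Z (cmp lam lam')"
  proof
    fix y assume y: "y \<in> Z lam'"
    have yF: "y\<in>F" and ly: "lam' \<in> y" using y by (auto simp: cyl_def)
    have "s lam \<in> y" using filt(2)[OF yF ly] pre_rl lam' sr rL by metis
    hence yZ: "y \<in> Z (s lam)" using yF by (auto simp: cyl_def)
    have xZ: "rsh lam y \<in> Z lam" using rs_Z lam yZ by blast
    have "cmp lam lam' \<in> rsh lam y" unfolding rshift_def using cl ly sr pre_refl by blast
    hence "rsh lam y \<in> Z (cmp lam lam')" using xZ by (auto simp: cyl_def)
    moreover have "ls lam (rsh lam y) = y" using ls_rs lam yZ by blast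
    ultimately show "y \<in> ls lam ` Z (cmp lam lam')" by (metis image_eqI)
  qed
qed

end

lemma canc_pg:
  assumes w: "wqlo G P" and pg: "Pgraph G P L Ob r s cmp d"
    and a: "a\<in>L" "m\<in>L" "m'\<in>L" "s a = r m" "s a = r m'" "cmp a m = cmp a m'"
  shows "m = m'"
proof -
  have grp: "group G" and PC: "P \<subseteq> carrier G" using w unfolding wqlo_def by auto
  have dP: "\<forall>x\<in>L. d x \<in> P" and dc: "\<forall>a\<in>L. \<forall>b\<in>L. s a = r b \<longrightarrow> d (cmp a b) = d a \<otimes>\<^bsub>G\<^esub> d b"
    and uf: "\<forall>a\<in>L. \<forall>p\<in>P. \<forall>q\<in>P. d a = p \<otimes>\<^bsub>G\<^esub> q \<longrightarrow>
          (\<exists>!(m, n). m \<in> L \<and> n \<in> L \<and> s m = r n \<and> a = cmp m n \<and> d m = p \<and> d n = q)"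
    and sc: "small_category L Ob r s cmp"
    using pg unfolding Pgraph_def by auto
  have cL: "cmp a m \<in> L" using sc a unfolding small_category_def by blast
  have "d a \<otimes>\<^bsub>G\<^esub> d m = d (cmp a m)" using dc a(1,2,4) by simp
  also have "\<dots> = d (cmp a m')" using a(6) by simp
  also have "\<dots> = d a \<otimes>\<^bsub>G\<^esub> d m'" using dc a(1,3,5) by simp
  finally have "d a \<otimes>\<^bsub>G\<^esub> d m = d a \<otimes>\<^bsub>G\<^esub> d m'" .
  moreover have "d a \<in> carrier G" "d m \<in> carrier G" "d m' \<in> carrier G" using dP PC a by auto
  ultimately have dm: "d m = d m'" using monoid.Units_l_cancel[OF group.is_monoid[OF grp]] group.Units_eq[OF grp] by simp
  have "\<exists>!(x, y). x \<in> L \<and> y \<in> L \<and> s x = r y \<and> cmp a m = cmp x y \<and> d x = d a \<and> d y = d m"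
  proof -
    have e: "d (cmp a m) = d a \<otimes>\<^bsub>G\<^esub> d m" using dc a(1,2,4) by simp
    have "d a \<in> P" "d m \<in> P" using dP a by auto
    from uf[rule_format, OF cL this e] show ?thesis .
  qed
  note E = this
  have "(THE w. case w of (x, y) \<Rightarrow> x \<in> L \<and> y \<in> L \<and> s x = r y \<and> cmp a m = cmp x y \<and> d x = d a \<and> d y = d m) = (a, m)"
    by (rule the1_equality[OF E]) (use a in auto)
  moreover have "(THE w. case w of (x, y) \<Rightarrow> x \<in> L \<and> y \<in> L \<and> s x = r y \<and> cmp a m = cmp x y \<and> d x = d a \<and> d y = d m) = (a, m')"
    by (rule the1_equality[OF E]) (use a dm in auto)
  ultimately show ?thesis by simp
qed

theorem lemma5p3:
  fixes G :: "('g, 'b) monoid_scheme" and P :: "'g set"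
    and L Ob :: "'a set" and r s :: "'a \<Rightarrow> 'a" and cmp :: "'a \<Rightarrow> 'a \<Rightarrow> 'a"
    and d :: "'a \<Rightarrow> 'g" and lam lam' :: 'a
  assumes "wqlo G P"
    and "Pgraph G P L Ob r s cmp d"
    and "FA L r s cmp \<noteq> {}"
    and "lam \<in> L" and "lam' \<in> L" and "s lam = r lam'"
  shows "continuous_map (subtopology (filter_top L r s cmp) (cyl L r s cmp lam))
                        (subtopology (filter_top L r s cmp) (cyl L r s cmp (s lam)))
                        (lshift L r s cmp lam)
       \<and> bij_betw (lshift L r s cmp lam) (cyl L r s cmp lam) (cyl L r s cmp (s lam))
       \<and> (\<forall>x\<in>cyl L r s cmp lam. rshift L r s cmp lam (lshift L r s cmp lam x) = x)
       \<and> (\<forall>y\<in>cyl L r s cmp (s lam). lshift L r s cmp lam (rshift L r s cmp lam y) = y)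
       \<and> lshift L r s cmp lam ` cyl L r s cmp (cmp lam lam') = cyl L r s cmp lam'"
proof -
  interpret pg L Ob r s cmp
  proof
    show "small_category L Ob r s cmp" using assms(2) unfolding Pgraph_def by auto
  next
    fix a m m' assume "a\<in>L" "m\<in>L" "m'\<in>L" "s a = r m" "s a = r m'" "cmp a m = cmp a m'"
    thus "m = m'" using canc_pg[OF assms(1,2)] by blast
  qed
  have b: "bij_betw (ls lam) (Z lam) (Z (s lam))"
    by (rule bij_betw_byWitness[where f'="rsh lam"]) (use rs_ls ls_rs ls_Z rs_Z assms(4) in auto)
  show ?thesis
  proof (intro conjI ballI)
    show "continuous_map (subtopology (filter_top L r s cmp) (Z lam)) (subtopology (filter_top L r s cmp) (Z (s lam))) (ls lam)"
      using ls_cont assms(4) .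
    show "bij_betw (ls lam) (Z lam) (Z (s lam))" using b .
    show "ls lam ` Z (cmp lam lam') = Z lam'" using ls_img assms(4-6) .
  qed (use rs_ls ls_rs assms(4) in auto)
qed

end
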